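(* Let $\mathcal A(x,m)=\{\mu\in\mathcal P(\mathcal X):\mu\ll m\}$ (the dual sets of the worst-case mapping $\sigma(x,m,v)=\max_{y:m(y)>0}v(y)$). Then the associated risk multikernel $\mathfrak M$ is not semi-differentiable at $\mathcal I$ in any direction $K\in\mathcal T_{\mathcal Q}(\mathcal I)$ with $K\ne0$.
   Context: $\mathcal X$ is a finite set, $\mathcal P(\mathcal X)$ the probability measures on $\mathcal X$, $\mathcal S$ the vector space of signed kernels $K:\mathcal X\to\mathcal M(\mathcal X)$, written $K(y|x)$, with norm $\|K\|=\sup\{\sum_{y}\varphi(y)K(y|x):x\in\mathcal X,\ -1\le\varphi\le1\}$; $\mathcal Q\subset\mathcal S$ the stochastic kernels; $\mathcal I(x)=\delta_x$. $\mathrm d(K,B)=\inf_{M\in B}\|K-M\|$ ($=+\infty$ if $B=\emptyset$), and $\mathrm{dist}(\mathcal S_1,\mathcal S_2)=\max(\sup_{K\in\mathcal S_1}\mathrm d(K,\mathcal S_2),\sup_{K\in\mathcal S_2}\mathrm d(K,\mathcal S_1))$. The tangent cone is $\mathcal T_{\mathcal Q}(\mathcal I)=\{K\in\mathcal S:\lim_{\tau\downarrow0}\mathrm d(K,\frac1\tau(\mathcal Q-\mathcal I))=0\}$. The risk multikernel associated with $\mathcal A$ is $\mathfrak M(Q)=\{M\in\mathcal Q: M(x)\in\mathcal A(x,Q(x))\ \forall x\}$. $\mathfrak M$ is semi-differentiable at $\mathcal I$ in direction $K\in\mathcal T_{\mathcal Q}(\mathcal I)$ if there is a nonempty set $\mathfrak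 D(K)\subset\mathcal S$ such that for every $\varepsilon_n\downarrow0$ and every $K_n\to K$ with $K_n\in\mathcal T_{\mathcal Q}(\mathcal I)$, $\lim_{n}\mathrm{dist}\big(\frac1{\varepsilon_n}[\mathfrak M(\mathcal I+\varepsilon_nK_n)-\mathcal I],\mathfrak D(K)\big)=0$. *)

theory Defs
  imports "HOL-Analysis.Analysis"
begin

(* A signed kernel K on the finite set 'a is a function K :: 'a => 'a => real,
   with K x y = K(y|x). *)
type_synonym 'a kernel = "'a \<Rightarrow> 'a \<Rightarrow> real"

definition knorm :: "('a::finite) kernel \<Rightarrow> real" where
  "knorm K = Sup {(\<Sum>y\<in>UNIV. \<phi> y * K x y) | x \<phi>. \<forall>y. -1 \<le> \<phi> y \<and> \<phi> y \<le> 1}"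

definition stoch :: "('a::finite) kernel set" where
  "stoch = {Q. \<forall>x. (\<forall>y. 0 \<le> Q x y) \<and> (\<Sum>y\<in>UNIV. Q x y) = 1}"

definition idk :: "'a kernel" where
  "idk = (\<lambda>x y. if y = x then 1 else 0)"

(* d(K,B) = inf_{M in B} ||K - M||, = +infinity if B is empty *)
definition kd :: "('a::finite) kernel \<Rightarrow> 'a kernel set \<Rightarrow> ereal" where
  "kd K B = (INF M\<in>B. ereal (knorm (\<lambda>x y. K x y - M x y)))"

definition kdist :: "('a::finite) kernel set \<Rightarrow> 'a kernel set \<Rightarrow> ereal" where
  "kdist S1 S2 = max (SUP K\<in>S1. kd K S2) (SUP K\<in>S2. kd K S1)"

definition scaled_diff :: "real \<Rightarrow> 'a kernel set \<Rightarrow> 'a kernel set" where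
  "scaled_diff t B = (\<lambda>M. \<lambda>x y. (M x y - idk x y) / t) ` B"

definition tangent_cone :: "('a::finite) kernel set" where
  "tangent_cone = {K. ((\<lambda>\<tau>. kd K (scaled_diff \<tau> stoch)) \<longlongrightarrow> 0) (at_right (0::real))}"

definition dualA :: "'a \<Rightarrow> ('a::finite \<Rightarrow> real) \<Rightarrow> ('a \<Rightarrow> real) set" where
  "dualA x m = {\<mu>. (\<forall>y. 0 \<le> \<mu> y) \<and> (\<Sum>y\<in>UNIV. \<mu> y) = 1 \<and> (\<forall>y. m y = 0 \<longrightarrow> \<mu> y = 0)}"

definition riskM :: "('a::finite) kernel \<Rightarrow> 'a kernel set" where
  "riskM Q = {M \<in> stoch. \<forall>x. M x \<in> dualA x (Q x)}"

definition semi_diff_at_I :: "('a::finite) kernel \<Rightarrow> bool" where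
  "semi_diff_at_I K \<longleftrightarrow> (\<exists>D. D \<noteq> {} \<and>
     (\<forall>(\<epsilon>::nat \<Rightarrow> real) Kn. (\<forall>n. 0 < \<epsilon> n) \<and> decseq \<epsilon> \<and> \<epsilon> \<longlonglongrightarrow> 0 \<and>
        (\<lambda>n. knorm (\<lambda>x y. Kn n x y - K x y)) \<longlonglongrightarrow> 0 \<and> (\<forall>n. Kn n \<in> tangent_cone) \<longrightarrow>
        (\<lambda>n. kdist (scaled_diff (\<epsilon> n) (riskM (\<lambda>x y. idk x y + \<epsilon> n * Kn n x y))) D)
          \<longlonglongrightarrow> 0))"

end

theory Submission
  imports Defs
begin

lemma knorm_ge:
  fixes K :: "('a::finite) kernel"
  assumes "\<forall>y. -1 \<le> \<phi> y \<and> \<phi> y \<le> 1"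
  shows "(\<Sum>y\<in>UNIV. \<phi> y * K x y) \<le> knorm K"
  unfolding knorm_def
proof (rule cSup_upper)
  show "(\<Sum>y\<in>UNIV. \<phi> y * K x y) \<in> {(\<Sum>y\<in>UNIV. \<phi> y * K x y) | x \<phi>. \<forall>y. -1 \<le> \<phi> y \<and> \<phi> y \<le> 1}"
    using assms by blast
  show "bdd_above {(\<Sum>y\<in>UNIV. \<phi> y * K x y) | x \<phi>. \<forall>y. -1 \<le> \<phi> y \<and> \<phi> y \<le> 1}"
  proof (rule bdd_aboveI)
    fix r assume "r \<in> {(\<Sum>y\<in>UNIV. \<phi> y * K x y) | x \<phi>. \<forall>y. -1 \<le> \<phi> y \<and> \<phi> y \<le> 1}"
    then obtain x' \<psi> where r: "r = (\<Sum>y\<in>UNIV. \<psi> y * K x' y)" and b: "\<forall>y. -1 \<le> \<psi> y \<and> \<psi> y \<le> 1"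
      by blast
    have "r \<le> (\<Sum>y\<in>UNIV. \<bar>K x' y\<bar>)"
      unfolding r
    proof (rule sum_mono)
      fix y
      have "\<bar>\<psi> y\<bar> \<le> 1" using b by (simp add: abs_le_iff)
      hence "\<bar>\<psi> y * K x' y\<bar> \<le> \<bar>K x' y\<bar>"
        by (simp add: abs_mult mult_left_le_one_le)
      thus "\<psi> y * K x' y \<le> \<bar>K x' y\<bar>" by linarith
    qed
    also have "\<dots> \<le> (\<Sum>x\<in>UNIV. \<Sum>y\<in>UNIV. \<bar>K x y\<bar>)"
      by (rule member_le_sum[where f="\<lambda>x. \<Sum>y\<in>UNIV. \<bar>K x y\<bar>"]) (auto intro: sum_nonneg)
    finally show "r \<le> (\<Sum>x\<in>UNIV. \<Sum>y\<in>UNIV. \<bar>K x y\<bar>)" .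
  qed
qed

lemma sum_delta_mult:
  fixes K :: "('a::finite) kernel"
  shows "(\<Sum>z\<in>UNIV. (if z = y then c else 0) * K x z) = c * K x y"
proof -
  have e: "(\<lambda>z. (if z = y then c else 0) * K x z) = (\<lambda>z. if z = y then c * K x z else 0)" by auto
  have "(\<Sum>z\<in>UNIV. if z = y then c * K x z else 0) = c * K x y"
    using sum.delta[of "UNIV::'a set" y "\<lambda>z. c * K x z"] by simp
  thus ?thesis by (simp only: e)
qed

lemma sum_delta1: "(\<Sum>y\<in>(UNIV::'a::finite set). if y = x then 1 else 0) = (1::real)"
  using sum.delta[of "UNIV::'a set" x "\<lambda>_. 1::real"] by simp

lemma knorm_entry:
  fixes K :: "('a::finite) kernel"
  shows "K x y \<le> knorm K" and "- K x y \<le> knorm K"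
proof -
  have "(\<Sum>z\<in>UNIV. (if z = y then 1 else 0) * K x z) \<le> knorm K"
    by (rule knorm_ge) auto
  moreover have "(\<Sum>z\<in>UNIV. (if z = y then 1 else 0) * K x z) = K x y"
    using sum_delta_mult[of y 1 K x] by simp
  ultimately show "K x y \<le> knorm K" by simp
  have "(\<Sum>z\<in>UNIV. (if z = y then -1 else 0) * K x z) \<le> knorm K"
    by (rule knorm_ge) auto
  moreover have "(\<Sum>z\<in>UNIV. (if z = y then -1 else 0) * K x z) = - K x y"
    using sum_delta_mult[of y "-1" K x] by simp
  ultimately show "- K x y \<le> knorm K" by simp
qed

lemma idk_sum: "(\<Sum>y\<in>UNIV. idk (x::'a::finite) y) = (1::real)"
  unfolding idk_def by (rule sum_delta1)

lemma rowsum_zero: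
  fixes K :: "('a::finite) kernel"
  assumes "K \<in> tangent_cone"
  shows "(\<Sum>y\<in>UNIV. K x y) = 0"
proof (rule ccontr)
  define s where "s = (\<Sum>y\<in>UNIV. K x y)"
  assume "(\<Sum>y\<in>UNIV. K x y) \<noteq> 0"
  hence s0: "\<bar>s\<bar> > 0" by (simp add: s_def)
  have bound: "ereal \<bar>s\<bar> \<le> kd K (scaled_diff \<tau> stoch)" for \<tau>
    unfolding kd_def
  proof (rule INF_greatest)
    fix A :: "'a kernel" assume "A \<in> scaled_diff \<tau> stoch"
    then obtain M where M: "M \<in> stoch" and A: "A = (\<lambda>x y. (M x y - idk x y) / \<tau>)"
      unfolding scaled_diff_def by blast
    have "(\<Sum>y\<in>UNIV. A x y) = ((\<Sum>y\<in>UNIV. M x y) - (\<Sum>y\<in>UNIV. idk x y)) / \<tau>"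
      unfolding A by (simp add: sum_divide_distrib[symmetric] sum_subtractf)
    also have "\<dots> = 0" using M by (simp add: stoch_def idk_sum)
    finally have A0: "(\<Sum>y\<in>UNIV. A x y) = 0" .
    have "(\<Sum>y\<in>UNIV. 1 * (K x y - A x y)) \<le> knorm (\<lambda>x y. K x y - A x y)"
      by (rule knorm_ge[where K="\<lambda>x y. K x y - A x y"]) auto
    hence 1: "s \<le> knorm (\<lambda>x y. K x y - A x y)"
      using A0 by (simp add: s_def sum_subtractf)
    have "(\<Sum>y\<in>UNIV. (-1) * (K x y - A x y)) \<le> knorm (\<lambda>x y. K x y - A x y)"
      by (rule knorm_ge[where K="\<lambda>x y. K x y - A x y"]) auto
    hence 2: "- s \<le> knorm (\<lambda>x y. K x y - A x y)"
      using A0 by (simp add: s_def sum_subtractf sum_negf)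
    show "ereal \<bar>s\<bar> \<le> ereal (knorm (\<lambda>x y. K x y - A x y))"
      using 1 2 by simp
  qed
  have "ereal \<bar>s\<bar> \<le> 0"
    apply (rule tendsto_lowerbound[OF assms[unfolded tangent_cone_def, simplified]])
    using bound by auto
  thus False using s0 by simp
qed

lemma kdist_small1:
  fixes S D :: "('a::finite) kernel set"
  assumes "kdist S D < 1" "A \<in> S"
  obtains d where "d \<in> D" "knorm (\<lambda>x y. A x y - d x y) < 1"
proof -
  have "kd A D \<le> (SUP K\<in>S. kd K D)" using assms(2) by (rule SUP_upper)
  also have "\<dots> < 1" using assms(1) unfolding kdist_def by simp
  finally have "(INF M\<in>D. ereal (knorm (\<lambda>x y. A x y - M x y))) < 1" unfolding kd_def .
  then obtain d where "d \<in> D" "ereal (knorm (\<lambda>x y. A x y - d x y)) < 1"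
    by (auto simp: INF_less_iff)
  thus ?thesis using that by simp
qed

lemma kdist_small2:
  fixes S D :: "('a::finite) kernel set"
  assumes "kdist S D < 1" "d \<in> D"
  obtains B where "B \<in> S" "knorm (\<lambda>x y. d x y - B x y) < 1"
proof -
  have "kd d S \<le> (SUP K\<in>D. kd K S)" using assms(2) by (rule SUP_upper)
  also have "\<dots> < 1" using assms(1) unfolding kdist_def by simp
  finally have "(INF M\<in>S. ereal (knorm (\<lambda>x y. d x y - M x y))) < 1" unfolding kd_def .
  then obtain B where "B \<in> S" "ereal (knorm (\<lambda>x y. d x y - B x y)) < 1"
    by (auto simp: INF_less_iff)
  thus ?thesis using that by simp
qed

theorem mainTheorem11:
  fixes K :: "('a::finite) kernel"
  assumes "K \<in> tangent_cone" and "K \<noteq> (\<lambda>x y. 0)"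
  shows "\<not> semi_diff_at_I K"
proof
  have rs: "\<And>x. (\<Sum>y\<in>UNIV. K x y) = 0" using rowsum_zero[OF assms(1)] .
  obtain x0 y0 where xy: "y0 \<noteq> x0" "K x0 y0 \<noteq> 0"
  proof -
    obtain x1 y1 where k1: "K x1 y1 \<noteq> 0" using assms(2) by (meson ext)
    show ?thesis
    proof (cases "y1 = x1")
      case False thus ?thesis using that k1 by blast
    next
      case True
      have "(\<Sum>y\<in>UNIV. K x1 y) = K x1 x1 + (\<Sum>y\<in>UNIV-{x1}. K x1 y)"
        by (simp add: sum.remove)
      hence "(\<Sum>y\<in>UNIV-{x1}. K x1 y) \<noteq> 0" using rs k1 True by simp
      then obtain y where "y \<in> UNIV - {x1}" "K x1 y \<noteq> 0"
        by (meson sum.neutral)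
      thus ?thesis using that by blast
    qed
  qed
  assume "semi_diff_at_I K"
  then obtain D where D: "D \<noteq> {}" and
    P: "\<And>(\<epsilon>::nat \<Rightarrow> real) Kn. (\<forall>n. 0 < \<epsilon> n) \<and> decseq \<epsilon> \<and> \<epsilon> \<longlonglongrightarrow> 0 \<and>
        (\<lambda>n. knorm (\<lambda>x y. Kn n x y - K x y)) \<longlonglongrightarrow> 0 \<and> (\<forall>n. Kn n \<in> tangent_cone) \<Longrightarrow>
        (\<lambda>n. kdist (scaled_diff (\<epsilon> n) (riskM (\<lambda>x y. idk x y + \<epsilon> n * Kn n x y))) D)
          \<longlonglongrightarrow> 0"
    unfolding semi_diff_at_I_def by blast
  define C where "C = (\<Sum>x\<in>UNIV. \<bar>K x x\<bar>)"
  have C0: "C \<ge> 0" unfolding C_def by (simp add: sum_nonneg)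
  have Cx: "\<bar>K x x\<bar> \<le> C" for x
    unfolding C_def by (rule member_le_sum[where f="\<lambda>x. \<bar>K x x\<bar>"]) auto
  define \<epsilon> where "\<epsilon> = (\<lambda>n::nat. 1 / (real n + 1 + C))"
  have epos: "0 < \<epsilon> n" for n unfolding \<epsilon>_def using C0 by simp
  have einv: "1 / \<epsilon> n = real n + 1 + C" for n unfolding \<epsilon>_def by simp
  have edec: "decseq \<epsilon>"
    unfolding decseq_def \<epsilon>_def using C0 by (auto intro!: divide_left_mono mult_pos_pos)
  have elim: "\<epsilon> \<longlonglongrightarrow> 0"
  proof (rule tendsto_sandwich[OF _ _ tendsto_const LIMSEQ_inverse_real_of_nat])
    show "\<forall>\<^sub>F n in sequentially. 0 \<le> \<epsilon> n" using epos by (simp add: less_imp_le)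
    show "\<forall>\<^sub>F n in sequentially. \<epsilon> n \<le> inverse (real (Suc n))"
      unfolding \<epsilon>_def using C0 by (auto simp: inverse_eq_divide intro!: always_eventually divide_left_mono)
  qed
  have kn0: "knorm (\<lambda>(x::'a) (y::'a). 0::real) = (0::real)"
  proof -
    have "{(\<Sum>y\<in>(UNIV::'a set). \<phi> y * (0::real)) | (x::'a) \<phi>. \<forall>y. -1 \<le> \<phi> y \<and> \<phi> y \<le> (1::real)} = {0}"
      by (auto intro!: exI[of _ "\<lambda>_. 0"])
    thus ?thesis unfolding knorm_def by simp
  qed
  define S where "S = (\<lambda>n. scaled_diff (\<epsilon> n) (riskM (\<lambda>x y. idk x y + \<epsilon> n * K x y)))"
  have lim: "(\<lambda>n. kdist (S n) D) \<longlonglongrightarrow> 0"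
    unfolding S_def
    by (rule P[where Kn="\<lambda>n. K"]) (use epos edec elim assms(1) kn0 in auto)
  have "\<forall>\<^sub>F n in sequentially. kdist (S n) D < 1"
    using order_tendstoD(2)[OF lim, of 1] by simp
  then obtain N where N: "\<And>n. n \<ge> N \<Longrightarrow> kdist (S n) D < 1"
    unfolding eventually_sequentially by blast
  define m where "m = N + 2"
  define Mw where "Mw = (\<lambda>x::'a. if x = x0 then (\<lambda>y. if y = y0 then 1 else 0) else idk x)"
  have eC: "\<epsilon> m * \<bar>K x x\<bar> < 1" for x
  proof -
    have "\<epsilon> m * \<bar>K x x\<bar> \<le> \<epsilon> m * C" using Cx epos by (simp add: mult_left_mono less_imp_le)
    also have "\<dots> = C / (real m + 1 + C)" unfolding \<epsilon>_def by simp
    also have "\<dots> < 1" using C0 by simp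
    finally show ?thesis .
  qed
  have Mw_in: "Mw \<in> riskM (\<lambda>x y. idk x y + \<epsilon> m * K x y)"
    unfolding riskM_def stoch_def dualA_def
  proof (intro CollectI conjI allI impI)
    fix x y
    show "0 \<le> Mw x y" unfolding Mw_def idk_def by auto
    show "0 \<le> Mw x y" unfolding Mw_def idk_def by auto
    show "(\<Sum>y\<in>UNIV. Mw x y) = 1" "(\<Sum>y\<in>UNIV. Mw x y) = 1"
      unfolding Mw_def idk_def by auto
    assume z: "idk x y + \<epsilon> m * K x y = 0"
    show "Mw x y = 0"
    proof (cases "x = x0")
      case True
      thus ?thesis using z xy epos[of m] unfolding Mw_def idk_def by auto
    next
      case False
      have "y \<noteq> x"
      proof
        assume "y = x"
        hence "1 + \<epsilon> m * K x x = 0" using z by (simp add: idk_def)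
        hence "\<epsilon> m * K x x = -1" by linarith
        hence "\<bar>\<epsilon> m * K x x\<bar> = 1" by simp
        hence "\<epsilon> m * \<bar>K x x\<bar> = 1" using epos[of m] by (simp add: abs_mult)
        thus False using eC[of x] by simp
      qed
      thus ?thesis using False unfolding Mw_def idk_def by auto
    qed
  qed
  define A where "A = (\<lambda>x y. (Mw x y - idk x y) / \<epsilon> m)"
  have A_in: "A \<in> S m" unfolding S_def scaled_diff_def A_def using Mw_in by blast
  have Av: "A x0 y0 = 1 / \<epsilon> m" unfolding A_def Mw_def idk_def using xy by simp
  obtain d where d: "d \<in> D" "knorm (\<lambda>x y. A x y - d x y) < 1"
    using kdist_small1[OF N[of m] A_in] m_def by auto
  obtain B where B: "B \<in> S N" "knorm (\<lambda>x y. d x y - B x y) < 1"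
    using kdist_small2[OF N[of N] d(1)] by auto
  obtain M' where M': "M' \<in> riskM (\<lambda>x y. idk x y + \<epsilon> N * K x y)"
    and BM: "B = (\<lambda>x y. (M' x y - idk x y) / \<epsilon> N)"
    using B(1) unfolding S_def scaled_diff_def by blast
  have "M' x0 y0 \<le> (\<Sum>y\<in>UNIV. M' x0 y)"
    by (rule member_le_sum[where f="M' x0"]) (use M' in \<open>auto simp: riskM_def stoch_def\<close>)
  hence M1: "M' x0 y0 \<le> 1" using M' by (simp add: riskM_def stoch_def)
  have Bv: "B x0 y0 \<le> 1 / \<epsilon> N"
    unfolding BM idk_def using xy M1 epos[of N] by (simp add: divide_right_mono)
  have "A x0 y0 - d x0 y0 < 1" using knorm_entry(1)[of "\<lambda>x y. A x y - d x y" x0 y0] d(2) by simp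
  moreover have "d x0 y0 - B x0 y0 < 1" using knorm_entry(1)[of "\<lambda>x y. d x y - B x y" x0 y0] B(2) by simp
  ultimately have "1 / \<epsilon> m - 2 < 1 / \<epsilon> N" using Av Bv by linarith
  thus False unfolding einv m_def by simp
qed

end
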